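(* Let $z=z[x;t]$ be defined by the differential equation $$\frac{dz}{dt}=L(t,x(t),{^C_aD^\alpha_t}x(t),z(t)),\quad t\in[a,b],\qquad z(a)=z_a,$$ where $x=(x_1,\ldots,x_n)$, ${^C_aD^\alpha_t}x=({^C_aD^{\alpha_1}_t}x_1,\ldots,{^C_aD^{\alpha_n}_t}x_n)$, $\alpha_j\in(0,1)$, $x\in C^1([a,b],\mathbb R^n)$ with ${^C_aD^\alpha_t}x\in C^1([a,b],\mathbb R^n)$, $L:[a,b]\times\mathbb R^{2n+1}\to\mathbb R$ is of class $C^1$, and, writing $[x,z](t):=(t,x(t),{^C_aD^\alpha_t}x(t),z(t))$ and $\lambda(t):=\exp\left(-\int_a^t \frac{\partial L}{\partial z}[x,z](\tau)d\tau\right)$, the functions ${_tD^{\alpha_j}_b}\left(\lambda(t)\frac{\partial L}{\partial {^C_aD^{\alpha_j}_t}x_j}[x,z](t)\right)$ exist and are continuous on $[a,b]$. Consider a one-parameter family of transformations $\bar{x}_j=h_j(t,x,s)$, $j=1,\ldots,n$, $s\in(-\varepsilon,\varepsilon)$, with $h_j$ of class $C^2$ and $h_j(t,x,0)=x_j$, so that $h_j(t,x,s)=x_j+s\xi_j(t,x)+o(s)$ with $\xi_j(t,x)=\frac{\partial}{\partial s}h_j(t,x,s)|_{s=0}$. Let $\theta(t)=\frac{d}{ds}\bar z[x+s\xi;t]\big|_{s=0}$, where $\bar z$ solves the same differential equation with the same initial value $z(a)=z_a$ and $x$ replaced by $\bar x$. Suppose the functional $z$ is invariant under this family, i.e. $\theta(t)\equiv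 0$. Then $$\sum_{j=1}^n\mathcal{D}^{\alpha_j}\left[\lambda(t)\frac{\partial L}{\partial {^C_aD^{\alpha_j}_t}x_j}[x,z](t),\xi_j(t,x)\right]=0,$$ where $\mathcal{D}^{\alpha}[f,g]:=f\cdot {^C_aD^{\alpha}_t}g- g\cdot{_tD^{\alpha}_b}f$, holds along the solutions of the generalized fractional Euler--Lagrange equations $$\lambda(t)\frac{\partial L}{\partial x_j}[x,z](t)+{_tD^{\alpha_j}_b}\left(\lambda(t)\frac{\partial L}{\partial {^C_aD^{\alpha_j}_t}x_j}[x,z](t)\right)=0,\quad j=1,\ldots,n.$$
   Context: ${^C_aD^\alpha_t}$ denotes the left Caputo fractional derivative and ${_tD^\alpha_b}$ the right Riemann--Liouville fractional derivative of order $\alpha\in(0,1)$: ${^C_aD^\alpha_t}x(t)=\frac{1}{\Gamma(1-\alpha)}\int_a^t(t-\tau)^{-\alpha}x'(\tau)d\tau$ and ${_tD^\alpha_b}x(t)=\frac{-1}{\Gamma(1-\alpha)}\frac{d}{dt}\int_t^b(\tau-t)^{-\alpha}x(\tau)d\tau$. *)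

theory Defs
  imports "HOL-Analysis.Analysis"
begin

definition C1_on :: "'a::real_normed_vector set \<Rightarrow> ('a \<Rightarrow> 'b::real_normed_vector) \<Rightarrow> bool" where
  "C1_on S f \<longleftrightarrow> (\<exists>f'. (\<forall>p\<in>S. (f has_derivative blinfun_apply (f' p)) (at p within S))
                        \<and> continuous_on S f')"

definition C2_on :: "'a::real_normed_vector set \<Rightarrow> ('a \<Rightarrow> 'b::real_normed_vector) \<Rightarrow> bool" where
  "C2_on S f \<longleftrightarrow> (\<exists>f'. (\<forall>p\<in>S. (f has_derivative blinfun_apply (f' p)) (at p within S))
                        \<and> C1_on S f')"

definition caputo_left :: "real \<Rightarrow> real \<Rightarrow> real \<Rightarrow> (real \<Rightarrow> real) \<Rightarrow> real \<Rightarrow> real" where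
  "caputo_left \<alpha> a b x t =
     1 / Gamma (1 - \<alpha>) * integral {a..t} (\<lambda>\<tau>. (t - \<tau>) powr (- \<alpha>) * vector_derivative x (at \<tau> within {a..b}))"

definition RL_right_integral :: "real \<Rightarrow> real \<Rightarrow> (real \<Rightarrow> real) \<Rightarrow> real \<Rightarrow> real" where
  "RL_right_integral \<alpha> b f s = integral {s..b} (\<lambda>\<tau>. (\<tau> - s) powr (- \<alpha>) * f \<tau>)"

definition RL_right :: "real \<Rightarrow> real \<Rightarrow> real \<Rightarrow> (real \<Rightarrow> real) \<Rightarrow> real \<Rightarrow> real" where
  "RL_right \<alpha> a b f t =
     - (1 / Gamma (1 - \<alpha>)) * vector_derivative (RL_right_integral \<alpha> b f) (at t within {a..b})"

definition RL_right_exists :: "real \<Rightarrow> real \<Rightarrow> real \<Rightarrow> (real \<Rightarrow> real) \<Rightarrow> real \<Rightarrow> bool" where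
  "RL_right_exists \<alpha> a b f t \<longleftrightarrow> RL_right_integral \<alpha> b f differentiable (at t within {a..b})"

definition caputo_vec :: "('n \<Rightarrow> real) \<Rightarrow> real \<Rightarrow> real \<Rightarrow> (real \<Rightarrow> (real^'n)) \<Rightarrow> real \<Rightarrow> (real^'n)" where
  "caputo_vec \<alpha> a b x t = (\<chi> j. caputo_left (\<alpha> j) a b (\<lambda>\<tau>. x \<tau> $ j) t)"

definition frac_D :: "real \<Rightarrow> real \<Rightarrow> real \<Rightarrow> (real \<Rightarrow> real) \<Rightarrow> (real \<Rightarrow> real) \<Rightarrow> real \<Rightarrow> real" where
  "frac_D \<alpha> a b f g t = f t * caputo_left \<alpha> a b g t - g t * RL_right \<alpha> a b f t"

end

theory Submission
  imports Defs
begin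



lemma band_cross:
  fixes f :: "real \<Rightarrow> real"
  assumes "u < w" "continuous_on {u..w} f" "f u \<ge> c1" "f w \<le> c2" "c2 < c1"
  shows "\<exists>u' w'. u \<le> u' \<and> u' < w' \<and> w' \<le> w \<and> f u' \<ge> c1 \<and> f w' \<le> c2 \<and>
            (\<forall>t\<in>{u'<..<w'}. c2 < f t \<and> f t < c1)"
proof -
  define S1 where "S1 = {t\<in>{u..w}. c1 \<le> f t}"
  have cl1: "closed S1" unfolding S1_def
    by (rule continuous_on_closed_Collect_le) (use assms in \<open>auto intro: continuous_on_const\<close>)
  have "u \<in> S1" using assms unfolding S1_def by auto
  then have ne1: "S1 \<noteq> {}" by auto
  have bd1: "bdd_above S1" unfolding S1_def by (auto intro: bdd_aboveI[of _ w])
  define u' where "u' = Sup S1"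
  have u'S: "u' \<in> S1" unfolding u'_def using closed_contains_Sup[OF ne1 bd1 cl1] .
  have "u \<le> u'" unfolding u'_def using \<open>u \<in> S1\<close> bd1 by (rule cSup_upper)
  have "u' \<le> w" using u'S unfolding S1_def by auto
  moreover have "u' \<noteq> w" using u'S assms unfolding S1_def by auto
  ultimately have "u' < w" by auto
  define S2 where "S2 = {t\<in>{u'..w}. f t \<le> c2}"
  have cl2: "closed S2" unfolding S2_def
    by (rule continuous_on_closed_Collect_le)
       (use assms \<open>u \<le> u'\<close> in \<open>auto intro: continuous_on_const continuous_on_subset\<close>)
  have "w \<in> S2" using assms \<open>u' < w\<close> unfolding S2_def by auto
  then have ne2: "S2 \<noteq> {}" by auto
  have bd2: "bdd_below S2" unfolding S2_def by (auto intro: bdd_belowI[of _ u'])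
  define w' where "w' = Inf S2"
  have w'S: "w' \<in> S2" unfolding w'_def using closed_contains_Inf[OF ne2 bd2 cl2] .
  have "w' \<le> w" unfolding w'_def using \<open>w \<in> S2\<close> bd2 by (rule cInf_lower)
  have "u' \<le> w'" using w'S unfolding S2_def by auto
  moreover have "u' \<noteq> w'" using w'S u'S assms unfolding S1_def S2_def by auto
  ultimately have "u' < w'" by auto
  have "\<forall>t\<in>{u'<..<w'}. c2 < f t \<and> f t < c1"
  proof
    fix t assume t: "t \<in> {u'<..<w'}"
    have tin: "t \<in> {u..w}" using t \<open>u \<le> u'\<close> \<open>w' \<le> w\<close> by auto
    have "t \<notin> S1"
    proof
      assume "t \<in> S1" then have "t \<le> u'" unfolding u'_def using bd1 by (rule cSup_upper)
      then show False using t by auto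
    qed
    then have "f t < c1" using tin unfolding S1_def by auto
    have "t \<notin> S2"
    proof
      assume "t \<in> S2" then have "w' \<le> t" unfolding w'_def using bd2 by (rule cInf_lower)
      then show False using t by auto
    qed
    then have "c2 < f t" using tin t unfolding S2_def by auto
    with \<open>f t < c1\<close> show "c2 < f t \<and> f t < c1" by auto
  qed
  then show ?thesis using \<open>u \<le> u'\<close> \<open>u' < w'\<close> \<open>w' \<le> w\<close> u'S w'S unfolding S1_def S2_def by blast
qed

lemma band_contra:
  fixes f f' :: "real \<Rightarrow> real"
  assumes pq: "p < q" and cont: "continuous_on {p..q} f"
    and der: "\<And>t. t \<in> {p<..<q} \<Longrightarrow> (f has_real_derivative f' t) (at t)"
    and pos: "\<And>t. t \<in> {p<..<q} \<Longrightarrow> \<bar>f t\<bar> \<le> \<beta> \<Longrightarrow> f' t \<ge> \<kappa>"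
    and kp: "\<kappa> > 0" and bp: "\<beta> > 0"
    and fp: "\<bar>f p\<bar> \<le> \<beta>/2" and fq: "\<bar>f q\<bar> \<le> \<beta>/2" and big: "\<kappa> * (q - p) > \<beta>"
  shows False
proof -
  have noinc: False if "p \<le> u" "u < w" "w \<le> q" "f u > f w"
      "\<forall>t\<in>{u<..<w}. \<bar>f t\<bar> \<le> \<beta>" for u w
  proof -
    have "f u \<le> f w"
    proof (rule DERIV_nonneg_imp_increasing_open[where f=f])
      show "u \<le> w" using that by auto
      show "continuous_on {u..w} f" using cont that by (auto intro: continuous_on_subset)
      fix x assume "u < x" "x < w"
      then have x: "x \<in> {p<..<q}" "\<bar>f x\<bar> \<le> \<beta>" using that by auto
      have "f' x \<ge> 0" using pos[OF x] kp by linarith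
      then show "\<exists>y. (f has_real_derivative y) (at x) \<and> 0 \<le> y"
        using der[OF x(1)] by blast
    qed
    then show False using that by auto
  qed
  show False
  proof (cases "\<forall>t\<in>{p..q}. \<bar>f t\<bar> \<le> \<beta>")
    case True
    have "f p - \<kappa> * p \<le> f q - \<kappa> * q"
    proof (rule DERIV_nonneg_imp_increasing_open[where f="\<lambda>t. f t - \<kappa> * t"])
      show "p \<le> q" using pq by auto
      show "continuous_on {p..q} (\<lambda>t. f t - \<kappa> * t)" using cont by (intro continuous_intros)
      fix x assume x: "p < x" "x < q"
      have "((\<lambda>t. f t - \<kappa> * t) has_real_derivative f' x - \<kappa>) (at x)"
        using der[of x] x by (auto intro!: derivative_eq_intros)
      moreover have "f' x - \<kappa> \<ge> 0" using pos[of x] True x by auto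
      ultimately show "\<exists>y. ((\<lambda>t. f t - \<kappa> * t) has_real_derivative y) (at x) \<and> 0 \<le> y" by blast
    qed
    then have "f q - f p \<ge> \<kappa> * (q - p)" by (simp add: algebra_simps)
    then show False using fp fq big by auto
  next
    case False
    then obtain t0 where t0: "t0 \<in> {p..q}" "\<bar>f t0\<bar> > \<beta>" by (auto simp: not_le)
    show False
    proof (cases "f t0 > \<beta>")
      case True
      have "t0 \<noteq> q" using fq True bp by auto
      then have "t0 < q" using t0 by auto
      obtain u' w' where uw: "t0 \<le> u'" "u' < w'" "w' \<le> q" "f u' \<ge> \<beta>" "f w' \<le> \<beta>/2"
          "\<forall>t\<in>{u'<..<w'}. \<beta>/2 < f t \<and> f t < \<beta>"
      proof -
        have c: "continuous_on {t0..q} f" using cont t0 by (auto intro: continuous_on_subset)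
        have "f t0 \<ge> \<beta>" "f q \<le> \<beta>/2" "\<beta>/2 < \<beta>" using True fq bp by auto
        from band_cross[OF \<open>t0 < q\<close> c this] show ?thesis using that by blast
      qed
      show False by (rule noinc[of u' w']) (use uw t0 bp in auto)
    next
      case False
      then have neg: "f t0 < -\<beta>" using t0 by auto
      have "t0 \<noteq> p" using fp neg bp by auto
      then have "p < t0" using t0 by auto
      obtain u' w' where uw: "p \<le> u'" "u' < w'" "w' \<le> t0" "f u' \<ge> -\<beta>/2" "f w' \<le> -\<beta>"
          "\<forall>t\<in>{u'<..<w'}. -\<beta> < f t \<and> f t < -\<beta>/2"
      proof -
        have c: "continuous_on {p..t0} f" using cont t0 by (auto intro: continuous_on_subset)
        have "f p \<ge> -\<beta>/2" "f t0 \<le> -\<beta>" "-\<beta> < -\<beta>/2" using neg fp bp by auto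
        from band_cross[OF \<open>p < t0\<close> c this] show ?thesis using that by blast
      qed
      show False by (rule noinc[of u' w']) (use uw t0 bp in auto)
    qed
  qed
qed




lemma powr_absint0:
  fixes \<alpha> c :: real
  assumes "\<alpha> < 1" "c \<ge> 0"
  shows "(\<lambda>v. v powr (-\<alpha>)) absolutely_integrable_on {0..c}"
proof (rule nonnegative_absolutely_integrable_1)
  show "(\<lambda>v. v powr (-\<alpha>)) integrable_on {0..c}"
    using has_integral_powr_from_0[of "-\<alpha>" c] assms unfolding integrable_on_def by auto
qed auto

lemma image_neg_affine:
  fixes a t :: real
  assumes "m < 0"
  shows "(\<lambda>x. (1 / m) *\<^sub>R x + - ((1 / m) *\<^sub>R c)) ` {p..q} = {(q - c)/m..(p - c)/m}"
proof -
  have e: "(\<lambda>x. (1 / m) *\<^sub>R x + - ((1 / m) *\<^sub>R c)) = (\<lambda>x. (x - c) / m)"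
    by (auto simp: diff_divide_distrib)
  have "(\<lambda>x. (x - c) / m) ` {p..q} = {(q - c)/m..(p - c)/m}"
  proof
    show "(\<lambda>x. (x - c) / m) ` {p..q} \<subseteq> {(q - c)/m..(p - c)/m}"
      using assms by (auto simp: divide_le_cancel)
    show "{(q - c)/m..(p - c)/m} \<subseteq> (\<lambda>x. (x - c) / m) ` {p..q}"
    proof
      fix y assume y: "y \<in> {(q - c)/m..(p - c)/m}"
      have "y = ((m*y + c) - c)/m" using assms by auto
      moreover have "m*y + c \<in> {p..q}"
      proof -
        have "(q - c)/m \<le> y" "y \<le> (p - c)/m" using y by auto
        then have "m * y \<le> q - c" "p - c \<le> m * y" using assms
          by (auto simp: pos_divide_le_eq neg_divide_le_eq neg_le_divide_eq mult.commute)
        then show ?thesis by auto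
      qed
      ultimately show "y \<in> (\<lambda>x. (x - c) / m) ` {p..q}" by blast
    qed
  qed
  then show ?thesis unfolding e .
qed

lemma powr_absint_refl:
  fixes \<alpha> a t :: real
  assumes "\<alpha> < 1" "a \<le> t"
  shows "(\<lambda>\<tau>. (t - \<tau>) powr (-\<alpha>)) absolutely_integrable_on {a..t}"
proof (rule nonnegative_absolutely_integrable_1)
  have "((\<lambda>v. v powr (-\<alpha>)) has_integral ((t-a) powr (1-\<alpha>) / (1-\<alpha>))) (cbox 0 (t-a))"
    using has_integral_powr_from_0[of "-\<alpha>" "t-a"] assms by auto
  from has_integral_affinity[OF this, of "-1" t]
  have "((\<lambda>x. (-x + t) powr (-\<alpha>)) has_integral ((t-a) powr (1-\<alpha>) / (1-\<alpha>)))
      ((\<lambda>x. (1 / -1) *\<^sub>R x + - ((1 / -1) *\<^sub>R t)) ` {0..t-a})" by simp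
  also have "((\<lambda>x. (1 / -1) *\<^sub>R x + - ((1 / -1) *\<^sub>R t)) ` {0..t-a}) = {a..t}"
    by (subst image_neg_affine) auto
  finally show "(\<lambda>\<tau>. (t - \<tau>) powr (-\<alpha>)) integrable_on {a..t}"
    unfolding integrable_on_def by (auto simp: algebra_simps)
qed auto

lemma cont_prod_absint:
  fixes \<phi> g :: "real \<Rightarrow> real"
  assumes "g absolutely_integrable_on {p..q}" "continuous_on {p..q} \<phi>"
  shows "(\<lambda>x. g x * \<phi> x) absolutely_integrable_on {p..q}"
proof -
  have "(\<lambda>x. \<phi> x * g x) absolutely_integrable_on {p..q}"
  proof (rule absolutely_integrable_bounded_measurable_product_real)
    show "\<phi> \<in> borel_measurable (lebesgue_on {p..q})"
      using assms by (intro continuous_imp_measurable_on_sets_lebesgue) auto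
    show "bounded (\<phi> ` {p..q})"
      using assms by (intro compact_imp_bounded compact_continuous_image) auto
  qed (use assms in auto)
  then show ?thesis by (simp add: mult.commute)
qed

lemma caputo_int_integrable:
  fixes \<phi> :: "real \<Rightarrow> real"
  assumes "\<alpha> < 1" "a \<le> t" "continuous_on {a..t} \<phi>"
  shows "(\<lambda>\<tau>. (t - \<tau>) powr (-\<alpha>) * \<phi> \<tau>) integrable_on {a..t}"
  using cont_prod_absint[OF powr_absint_refl[OF assms(1,2)] assms(3)]
  by (simp add: absolutely_integrable_on_def)

lemma caputo_subst:
  fixes \<phi> :: "real \<Rightarrow> real"
  assumes al: "\<alpha> < 1" and at: "a < t" and cont: "continuous_on {a..t} \<phi>"
  shows "integral {a..t} (\<lambda>\<tau>. (t - \<tau>) powr (-\<alpha>) * \<phi> \<tau>)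
       = (t - a) powr (1 - \<alpha>) * integral {0..1} (\<lambda>v. v powr (-\<alpha>) * \<phi> (t - (t - a) * v))"
proof -
  define I where "I = integral {a..t} (\<lambda>\<tau>. (t - \<tau>) powr (-\<alpha>) * \<phi> \<tau>)"
  have hI: "((\<lambda>\<tau>. (t - \<tau>) powr (-\<alpha>) * \<phi> \<tau>) has_integral I) (cbox a t)"
    using caputo_int_integrable[OF al _ cont] at unfolding I_def by (auto simp: has_integral_integral)
  have m: "-(t-a) \<noteq> 0" using at by auto
  from has_integral_affinity[OF hI m, of t]
  have h1: "((\<lambda>x. (t - (-(t-a) * x + t)) powr (-\<alpha>) * \<phi> (-(t-a) * x + t)) has_integral (I / (t-a)))
      ((\<lambda>x. (1 / -(t-a)) *\<^sub>R x + - ((1 / -(t-a)) *\<^sub>R t)) ` {a..t})"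
    using at by (simp add: divide_inverse mult.commute)
  have img: "((\<lambda>x. (1 / -(t-a)) *\<^sub>R x + - ((1 / -(t-a)) *\<^sub>R t)) ` {a..t}) = {0..1}"
    using at by (subst image_neg_affine) auto
  have h2: "((\<lambda>v. (t-a) powr (-\<alpha>) * (v powr (-\<alpha>) * \<phi> (t - (t - a) * v))) has_integral (I / (t-a))) {0..1}"
  proof (rule has_integral_spike_eq[THEN iffD1, OF negligible_empty _ h1[unfolded img]])
    fix v :: real assume v: "v \<in> {0..1} - {}"
    have "t - (-(t-a) * v + t) = (t-a) * v" by (simp add: algebra_simps)
    moreover have "((t-a) * v) powr (-\<alpha>) = (t-a) powr (-\<alpha>) * v powr (-\<alpha>)"
      using at v by (auto intro: powr_mult)
    ultimately show "(t - a) powr - \<alpha> * (v powr - \<alpha> * \<phi> (t - (t - a) * v)) =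
         (t - (- (t - a) * v + t)) powr - \<alpha> * \<phi> (- (t - a) * v + t)"
      by (simp add: algebra_simps)
  qed
  have pos: "(t-a) powr (-\<alpha>) > 0" using at by auto
  from has_integral_cmul[OF h2, of "inverse ((t-a) powr (-\<alpha>))"] pos
  have "((\<lambda>v. v powr (-\<alpha>) * \<phi> (t - (t - a) * v)) has_integral (I / (t-a) / (t-a) powr (-\<alpha>))) {0..1}"
    by (simp add: field_simps)
  then have J: "integral {0..1} (\<lambda>v. v powr (-\<alpha>) * \<phi> (t - (t - a) * v)) = I / (t-a) / (t-a) powr (-\<alpha>)"
    by (rule integral_unique)
  have P: "(t - a) powr (1 - \<alpha>) = (t-a) * (t-a) powr (-\<alpha>)"
    using at by (simp add: powr_diff powr_minus divide_inverse)
  have gen: "I = (t-a) * P * (I / (t-a) / P)" if "P > 0" "t - a > 0" for P :: real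
    using that by (simp add: field_simps)
  show ?thesis unfolding I_def[symmetric] J P using gen[OF pos] at by simp
qed

lemma conv_pt_in:
  fixes a x v :: real
  assumes "a \<le> x" "x \<le> b" "0 \<le> v" "v \<le> 1"
  shows "x - (x - a) * v \<in> {a..b}"
proof -
  have "(x - a) * v \<le> (x - a) * 1" using assms by (intro mult_left_mono) auto
  moreover have "0 \<le> (x - a) * v" using assms by (intro mult_nonneg_nonneg) auto
  ultimately show ?thesis using assms unfolding atLeastAtMost_iff mult_1_right by (intro conjI; linarith)
qed

lemma J_cont:
  fixes \<phi> :: "real \<Rightarrow> real"
  assumes al: "\<alpha> < 1" and cont: "continuous_on {a..b} \<phi>"
  shows "continuous_on {a..b} (\<lambda>t. integral {0..1} (\<lambda>v. v powr (-\<alpha>) * \<phi> (t - (t - a) * v)))"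
proof -
  obtain B where B: "B > 0" "\<And>y. y \<in> {a..b} \<Longrightarrow> \<bar>\<phi> y\<bar> \<le> B"
  proof -
    have "bounded (\<phi> ` {a..b})" using cont by (intro compact_imp_bounded compact_continuous_image) auto
    then show ?thesis using that unfolding bounded_pos by auto
  qed
  have pint: "(\<lambda>v. v powr (-\<alpha>)) absolutely_integrable_on {0..1}" using powr_absint0[OF al] by auto
  have fint: "(\<lambda>v. v powr (-\<alpha>) * \<phi> (x - (x - a) * v)) integrable_on {0..1}"
    if x: "x \<in> {a..b}" for x
  proof -
    have "continuous_on {0..1} (\<lambda>v. \<phi> (x - (x - a) * v))"
      by (rule continuous_on_compose2[OF cont]) (use x conv_pt_in in \<open>auto intro!: continuous_intros\<close>)
    from cont_prod_absint[OF pint this] show ?thesis by (simp add: absolutely_integrable_on_def)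
  qed
  show ?thesis unfolding continuous_on_eq_continuous_within
  proof
    fix t assume t: "t \<in> {a..b}"
    show "continuous (at t within {a..b}) (\<lambda>t. integral {0..1} (\<lambda>v. v powr (-\<alpha>) * \<phi> (t - (t - a) * v)))"
      unfolding continuous_within_sequentially
    proof (intro allI impI)
      fix x :: "nat \<Rightarrow> real" assume x: "(\<forall>n. x n \<in> {a..b}) \<and> x \<longlonglongrightarrow> t"
      have "(\<lambda>k. integral {0..1} (\<lambda>v. v powr (-\<alpha>) * \<phi> (x k - (x k - a) * v))) \<longlonglongrightarrow>
              integral {0..1} (\<lambda>v. v powr (-\<alpha>) * \<phi> (t - (t - a) * v))"
      proof (rule dominated_convergence(2))
        show "(\<lambda>v. v powr (-\<alpha>) * \<phi> (x k - (x k - a) * v)) integrable_on {0..1}" for k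
          using fint x by auto
        show "(\<lambda>v. v powr (-\<alpha>) * B) integrable_on {0..1}"
          using pint by (auto simp: absolutely_integrable_on_def intro: integrable_on_mult_left)
        fix k v assume v: "(v::real) \<in> {0..1}"
        have "\<bar>\<phi> (x k - (x k - a) * v)\<bar> \<le> B" using B(2) conv_pt_in[of a "x k" b v] x v by auto
        then show "norm (v powr (-\<alpha>) * \<phi> (x k - (x k - a) * v)) \<le> v powr (-\<alpha>) * B"
          by (simp add: abs_mult mult_left_mono)
      next
        fix v assume v: "(v::real) \<in> {0..1}"
        have "(\<lambda>k. \<phi> (x k - (x k - a) * v)) \<longlonglongrightarrow> \<phi> (t - (t - a) * v)"
        proof (rule continuous_on_tendsto_compose[OF cont])
          show "(\<lambda>k. x k - (x k - a) * v) \<longlonglongrightarrow> t - (t - a) * v"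
            using x by (auto intro!: tendsto_intros)
          show "t - (t - a) * v \<in> {a..b}" using conv_pt_in[of a t b v] t v by auto
          show "\<forall>\<^sub>F k in sequentially. x k - (x k - a) * v \<in> {a..b}"
            using conv_pt_in[of a _ b v] x v by (auto intro!: always_eventually)
        qed
        then show "(\<lambda>k. v powr (-\<alpha>) * \<phi> (x k - (x k - a) * v)) \<longlonglongrightarrow> v powr (-\<alpha>) * \<phi> (t - (t - a) * v)"
          by (intro tendsto_intros)
      qed
      then show "((\<lambda>t. integral {0..1} (\<lambda>v. v powr (-\<alpha>) * \<phi> (t - (t - a) * v))) \<circ> x) \<longlonglongrightarrow>
              integral {0..1} (\<lambda>v. v powr (-\<alpha>) * \<phi> (t - (t - a) * v))"
        by (simp add: o_def)
    qed
  qed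
qed

lemma I_cont:
  fixes \<phi> :: "real \<Rightarrow> real"
  assumes al: "\<alpha> < 1" and cont: "continuous_on {a..b} \<phi>"
  shows "continuous_on {a..b} (\<lambda>t. integral {a..t} (\<lambda>\<tau>. (t - \<tau>) powr (-\<alpha>) * \<phi> \<tau>))"
proof -
  have "continuous_on {a..b} (\<lambda>t. (t - a) powr (1 - \<alpha>) * integral {0..1} (\<lambda>v. v powr (-\<alpha>) * \<phi> (t - (t - a) * v)))"
    using al by (intro continuous_intros J_cont[OF al cont] continuous_on_powr') auto
  then show ?thesis
  proof (rule continuous_on_eq)
    fix t assume t: "t \<in> {a..b}"
    show "(t - a) powr (1 - \<alpha>) * integral {0..1} (\<lambda>v. v powr (-\<alpha>) * \<phi> (t - (t - a) * v))
        = integral {a..t} (\<lambda>\<tau>. (t - \<tau>) powr (-\<alpha>) * \<phi> \<tau>)"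
    proof (cases "t = a")
      case True then show ?thesis by simp
    next
      case False
      then have "a < t" using t by auto
      moreover have "continuous_on {a..t} \<phi>" using cont t by (auto intro: continuous_on_subset)
      ultimately show ?thesis using caputo_subst[OF al] by simp
    qed
  qed
qed




lemma vec_lin:
  fixes l :: "real^'n \<Rightarrow> real"
  assumes "bounded_linear l"
  shows "l v = (\<Sum>j\<in>UNIV. l (axis j 1) * v $ j)"
proof -
  have "l v = l (\<Sum>j\<in>UNIV. v $ j *\<^sub>R axis j 1)"
    using basis_expansion[of v] by (simp add: scalar_mult_eq_scaleR)
  also have "\<dots> = (\<Sum>j\<in>UNIV. v $ j *\<^sub>R l (axis j 1))"
    using assms by (simp add: bounded_linear.linear linear_sum linear_scale)
  finally show ?thesis by (simp add: mult.commute)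
qed

lemma Lsplit:
  fixes B :: "(real \<times> (real^'n) \<times> (real^'n) \<times> real) \<Rightarrow>\<^sub>L real"
  shows "blinfun_apply B (0, v, w, 0) = (\<Sum>j\<in>UNIV. blinfun_apply B (0, axis j 1, 0, 0) * v $ j
            + blinfun_apply B (0, 0, axis j 1, 0) * w $ j)"
proof -
  have "blinfun_apply B (0, v, w, 0) = blinfun_apply B (0, v, 0, 0) + blinfun_apply B (0, 0, w, 0)"
    using blinfun.add_right[of B "(0, v, 0, 0)" "(0, 0, w, 0)"] by simp
  also have "blinfun_apply B (0, v, 0, 0) = (\<Sum>j\<in>UNIV. blinfun_apply B (0, axis j 1, 0, 0) * v $ j)"
    by (rule vec_lin[of "\<lambda>v. blinfun_apply B (0, v, 0, 0)"]) (intro bounded_linear_intros)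
  also have "blinfun_apply B (0, 0, w, 0) = (\<Sum>j\<in>UNIV. blinfun_apply B (0, 0, axis j 1, 0) * w $ j)"
    by (rule vec_lin[of "\<lambda>w. blinfun_apply B (0, 0, w, 0)"]) (intro bounded_linear_intros)
  finally show ?thesis by (simp add: sum.distrib)
qed



lemma C1_vd:
  fixes f :: "real \<Rightarrow> 'b::real_normed_vector"
  assumes "C1_on {a..b} f"
  shows "\<exists>f'. (\<forall>t\<in>{a..b}. (f has_vector_derivative f' t) (at t within {a..b})) \<and> continuous_on {a..b} f'"
proof -
  obtain F where F: "\<forall>p\<in>{a..b}. (f has_derivative blinfun_apply (F p)) (at p within {a..b})"
      "continuous_on {a..b} F" using assms unfolding C1_on_def by blast
  have lin: "blinfun_apply (F p) = (\<lambda>u. u *\<^sub>R blinfun_apply (F p) 1)" for p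
  proof
    fix u :: real
    have "blinfun_apply (F p) (u *\<^sub>R 1) = u *\<^sub>R blinfun_apply (F p) 1" by (rule blinfun.scaleR_right)
    then show "blinfun_apply (F p) u = u *\<^sub>R blinfun_apply (F p) 1" by simp
  qed
  have "\<forall>t\<in>{a..b}. (f has_vector_derivative blinfun_apply (F t) 1) (at t within {a..b})"
    using F(1) lin unfolding has_vector_derivative_def by metis
  moreover have "continuous_on {a..b} (\<lambda>t. blinfun_apply (F t) 1)"
    using F(2) by (intro continuous_intros)
  ultimately show ?thesis by (intro exI[of _ "\<lambda>t. blinfun_apply (F t) 1"] conjI)
qed

lemma C1_cont:
  assumes "C1_on S f" shows "continuous_on S f"
proof -
  obtain F where F: "\<forall>p\<in>S. (f has_derivative blinfun_apply (F p)) (at p within S)"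
    using assms unfolding C1_on_def by blast
  then show ?thesis unfolding continuous_on_eq_continuous_within
    using has_derivative_continuous by blast
qed

lemma xi_eq:
  fixes h :: "real \<times> (real^'n) \<times> real \<Rightarrow> real"
  assumes eps: "\<epsilon> > 0" and t: "t \<in> {a..b}"
    and H': "\<And>p. p \<in> {a..b} \<times> UNIV \<times> {-\<epsilon><..<\<epsilon>} \<Longrightarrow>
        (h has_derivative blinfun_apply (H' p)) (at p within {a..b} \<times> UNIV \<times> {-\<epsilon><..<\<epsilon>})"
    and xi: "((\<lambda>s. h (t, y, s)) has_real_derivative \<xi>) (at 0)"
  shows "\<xi> = blinfun_apply (H' (t, y, 0)) (0, 0, 1)"
proof -
  let ?S = "{a..b} \<times> UNIV \<times> {-\<epsilon><..<\<epsilon>}"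
  have l: "((\<lambda>s::real. (t, y, s)) has_derivative (\<lambda>s. (0, 0, s))) (at 0 within {-\<epsilon><..<\<epsilon>})"
    by (intro has_derivative_Pair has_derivative_const has_derivative_ident)
  have sub: "((\<lambda>s::real. (t, y, s)) ` {-\<epsilon><..<\<epsilon>}) \<subseteq> ?S" using t by auto
  have "(t, y, 0) \<in> ?S" using t eps by auto
  from has_derivative_subset[OF H'[OF this] sub]
  have "(h has_derivative blinfun_apply (H' (t, y, 0))) (at (t, y, 0) within ((\<lambda>s::real. (t, y, s)) ` {-\<epsilon><..<\<epsilon>}))" .
  from diff_chain_within[OF l this]
  have "((\<lambda>s. h (t, y, s)) has_derivative (\<lambda>s. blinfun_apply (H' (t, y, 0)) (0, 0, s))) (at 0 within {-\<epsilon><..<\<epsilon>})"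
    unfolding o_def .
  then have d1: "((\<lambda>s. h (t, y, s)) has_derivative (\<lambda>s. blinfun_apply (H' (t, y, 0)) (0, 0, s))) (at 0)"
    using eps at_within_open[of 0 "{-\<epsilon><..<\<epsilon>}"] by simp
  have d2: "((\<lambda>s. h (t, y, s)) has_derivative (*) \<xi>) (at 0)"
    using xi by (simp add: has_field_derivative_def)
  have "(\<lambda>s. blinfun_apply (H' (t, y, 0)) (0, 0, s)) = (*) \<xi>"
    by (rule has_derivative_unique[OF d1 d2])
  from fun_cong[OF this, of 1] show ?thesis by simp
qed




lemma xi_C1:
  fixes h :: "real \<times> (real^'n) \<times> real \<Rightarrow> real" and \<xi> :: "real \<Rightarrow> real^'n \<Rightarrow> real"
    and x :: "real \<Rightarrow> real^'n"
  assumes eps: "\<epsilon> > 0"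
    and x_C1: "C1_on {a..b} x"
    and h_C2: "C2_on ({a..b} \<times> UNIV \<times> {-\<epsilon><..<\<epsilon>}) h"
    and xi_def: "\<And>t y. t \<in> {a..b} \<Longrightarrow> ((\<lambda>s. h (t, y, s)) has_real_derivative \<xi> t y) (at 0)"
  shows "\<exists>g'. (\<forall>t\<in>{a..b}. ((\<lambda>t. \<xi> t (x t)) has_vector_derivative g' t) (at t within {a..b}))
          \<and> continuous_on {a..b} g'"
proof -
  let ?S = "{a..b} \<times> UNIV \<times> {-\<epsilon><..<\<epsilon>}"
  obtain H' where H'1: "\<forall>p\<in>?S. (h has_derivative blinfun_apply (H' p)) (at p within ?S)"
     and H'2: "C1_on ?S H'" using h_C2 unfolding C2_on_def by blast
  obtain H'' where H''1: "\<forall>p\<in>?S. (H' has_derivative blinfun_apply (H'' p)) (at p within ?S)"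
     and H''2: "continuous_on ?S H''" using H'2 unfolding C1_on_def by blast
  obtain X' where X'1: "\<forall>p\<in>{a..b}. (x has_derivative blinfun_apply (X' p)) (at p within {a..b})"
     and X'2: "continuous_on {a..b} X'" using x_C1 unfolding C1_on_def by blast
  define c where "c t = (t, x t, 0::real)" for t
  have cS: "c ` {a..b} \<subseteq> ?S" using eps unfolding c_def by auto
  have xeq: "\<xi> t (x t) = blinfun_apply (H' (c t)) (0, 0, 1)" if "t \<in> {a..b}" for t
    unfolding c_def using xi_eq[OF eps that, of h H'] H'1 xi_def[OF that] by blast
  define g' where "g' t = blinfun_apply (blinfun_apply (H'' (c t)) (1, blinfun_apply (X' t) 1, 0)) (0, 0, 1)" for t
  have "((\<lambda>t. \<xi> t (x t)) has_vector_derivative g' t) (at t within {a..b})" if t: "t \<in> {a..b}" for t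
  proof -
    have dc: "(c has_derivative (\<lambda>u. (u, blinfun_apply (X' t) u, 0))) (at t within {a..b})"
      unfolding c_def using X'1 t by (auto intro!: derivative_eq_intros)
    have "c t \<in> ?S" using cS t by blast
    from bspec[OF H''1 this]
    have "(H' has_derivative blinfun_apply (H'' (c t))) (at (c t) within ?S)" .
    then have "(H' has_derivative blinfun_apply (H'' (c t))) (at (c t) within c ` {a..b})"
      using cS by (rule has_derivative_subset)
    from diff_chain_within[OF dc this]
    have "((\<lambda>t. H' (c t)) has_derivative (\<lambda>u. blinfun_apply (H'' (c t)) (u, blinfun_apply (X' t) u, 0))) (at t within {a..b})"
      unfolding o_def .
    from bounded_linear.has_derivative[OF blinfun.bounded_linear_left this]
    have d: "((\<lambda>t. blinfun_apply (H' (c t)) (0,0,1)) has_derivative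
          (\<lambda>u. blinfun_apply (blinfun_apply (H'' (c t)) (u, blinfun_apply (X' t) u, 0)) (0,0,1))) (at t within {a..b})" .
    have e: "(\<lambda>u. blinfun_apply (blinfun_apply (H'' (c t)) (u, blinfun_apply (X' t) u, 0)) (0,0,1)) = (\<lambda>u. u *\<^sub>R g' t)"
    proof
      fix u :: real
      have eq: "(u, blinfun_apply (X' t) u, 0::real) = u *\<^sub>R (1, blinfun_apply (X' t) 1, 0)"
        using blinfun.scaleR_right[of "X' t" u 1] by simp
      show "blinfun_apply (blinfun_apply (H'' (c t)) (u, blinfun_apply (X' t) u, 0)) (0,0,1) = u *\<^sub>R g' t"
        unfolding g'_def eq blinfun.scaleR_right blinfun.scaleR_left by (rule refl)
    qed
    show ?thesis unfolding has_vector_derivative_def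
      by (rule has_derivative_transform[OF t xeq d[unfolded e]])
  qed
  moreover have "continuous_on {a..b} g'"
  proof -
    have cc: "continuous_on {a..b} c" unfolding c_def
      using C1_cont[OF x_C1] by (intro continuous_intros)
    have "continuous_on {a..b} (\<lambda>t. H'' (c t))"
      by (rule continuous_on_compose2[OF H''2 cc cS])
    then show ?thesis unfolding g'_def using X'2 by (intro continuous_intros)
  qed
  ultimately show ?thesis by blast
qed




lemma caputo_eq:
  assumes ab: "a < b" and t: "t \<in> {a..b}"
    and d: "\<forall>t\<in>{a..b}. (g has_vector_derivative g' t) (at t within {a..b})"
  shows "caputo_left \<alpha> a b g t = 1 / Gamma (1 - \<alpha>) * integral {a..t} (\<lambda>\<tau>. (t - \<tau>) powr (-\<alpha>) * g' \<tau>)"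
proof -
  have "integral {a..t} (\<lambda>\<tau>. (t - \<tau>) powr (-\<alpha>) * vector_derivative g (at \<tau> within {a..b}))
      = integral {a..t} (\<lambda>\<tau>. (t - \<tau>) powr (-\<alpha>) * g' \<tau>)"
  proof (rule integral_cong)
    fix \<tau> assume "\<tau> \<in> {a..t}"
    then have "\<tau> \<in> {a..b}" using t by auto
    then have "vector_derivative g (at \<tau> within {a..b}) = g' \<tau>"
      using vector_derivative_within_closed_interval[OF ab] d by blast
    then show "(t - \<tau>) powr (-\<alpha>) * vector_derivative g (at \<tau> within {a..b}) = (t - \<tau>) powr (-\<alpha>) * g' \<tau>"
      by simp
  qed
  then show ?thesis unfolding caputo_left_def by simp
qed

lemma caputo_cont:
  assumes ab: "a < b" and al: "\<alpha> < 1"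
    and d: "\<forall>t\<in>{a..b}. (g has_vector_derivative g' t) (at t within {a..b})"
    and c: "continuous_on {a..b} g'"
  shows "continuous_on {a..b} (caputo_left \<alpha> a b g)"
proof -
  have "continuous_on {a..b} (\<lambda>t. 1 / Gamma (1 - \<alpha>) * integral {a..t} (\<lambda>\<tau>. (t - \<tau>) powr (-\<alpha>) * g' \<tau>))"
    by (intro continuous_intros I_cont[OF al c])
  then show ?thesis
    by (rule continuous_on_eq) (use caputo_eq[OF ab _ d] in auto)
qed

lemma caputo_lin:
  assumes ab: "a < b" and al: "\<alpha> < 1" and t: "t \<in> {a..b}"
    and df: "\<forall>t\<in>{a..b}. (f has_vector_derivative f' t) (at t within {a..b})"
    and cf: "continuous_on {a..b} f'"
    and dg: "\<forall>t\<in>{a..b}. (g has_vector_derivative g' t) (at t within {a..b})"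
    and cg: "continuous_on {a..b} g'"
  shows "caputo_left \<alpha> a b (\<lambda>\<tau>. f \<tau> + s * g \<tau>) t = caputo_left \<alpha> a b f t + s * caputo_left \<alpha> a b g t"
proof -
  have dfg: "\<forall>t\<in>{a..b}. ((\<lambda>\<tau>. f \<tau> + s * g \<tau>) has_vector_derivative (f' t + s * g' t)) (at t within {a..b})"
  proof
    fix t assume "t \<in> {a..b}"
    then have "(f has_vector_derivative f' t) (at t within {a..b})" "(g has_vector_derivative g' t) (at t within {a..b})"
      using df dg by auto
    then show "((\<lambda>\<tau>. f \<tau> + s * g \<tau>) has_vector_derivative (f' t + s * g' t)) (at t within {a..b})"
      by (intro has_vector_derivative_add) (auto simp: has_vector_derivative_mult_right)
  qed
  have ct: "continuous_on {a..t} f'" "continuous_on {a..t} g'"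
    using cf cg t by (auto intro: continuous_on_subset)
  have i1: "(\<lambda>\<tau>. (t - \<tau>) powr (-\<alpha>) * f' \<tau>) integrable_on {a..t}"
    using caputo_int_integrable[OF al _ ct(1)] t by auto
  have i2: "(\<lambda>\<tau>. (t - \<tau>) powr (-\<alpha>) * g' \<tau>) integrable_on {a..t}"
    using caputo_int_integrable[OF al _ ct(2)] t by auto
  have "integral {a..t} (\<lambda>\<tau>. (t - \<tau>) powr (-\<alpha>) * (f' \<tau> + s * g' \<tau>))
     = integral {a..t} (\<lambda>\<tau>. (t - \<tau>) powr (-\<alpha>) * f' \<tau> + s * ((t - \<tau>) powr (-\<alpha>) * g' \<tau>))"
    by (simp add: algebra_simps)
  also have "\<dots> = integral {a..t} (\<lambda>\<tau>. (t - \<tau>) powr (-\<alpha>) * f' \<tau>) + s * integral {a..t} (\<lambda>\<tau>. (t - \<tau>) powr (-\<alpha>) * g' \<tau>)"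
    using i1 i2 by (simp add: integral_add integrable_on_mult_right)
  finally show ?thesis
    unfolding caputo_eq[OF ab t df] caputo_eq[OF ab t dg] caputo_eq[OF ab t dfg]
    by (simp add: algebra_simps)
qed




theorem theorem4p1:
  fixes a b za \<epsilon> :: real
    and \<alpha> :: "'n::finite \<Rightarrow> real"
    and x :: "real \<Rightarrow> (real^'n)"
    and z :: "real \<Rightarrow> real"
    and L :: "real \<times> (real^'n) \<times> (real^'n) \<times> real \<Rightarrow> real"
    and L' :: "real \<times> (real^'n) \<times> (real^'n) \<times> real \<Rightarrow> (real \<times> (real^'n) \<times> (real^'n) \<times> real) \<Rightarrow>\<^sub>L real"
    and h :: "'n \<Rightarrow> real \<times> (real^'n) \<times> real \<Rightarrow> real"
    and \<xi> :: "'n \<Rightarrow> real \<Rightarrow> (real^'n) \<Rightarrow> real"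
    and Z :: "real \<Rightarrow> real \<Rightarrow> real"
  assumes ab: "a < b"
    and alpha: "\<And>j. 0 < \<alpha> j \<and> \<alpha> j < 1"
    and x_C1: "C1_on {a..b} x"
    and Dx_C1: "C1_on {a..b} (caputo_vec \<alpha> a b x)"
    \<comment> \<open>L is C^1 on [a,b] x R^(2n+1), with Frechet derivative L'\<close>
    and L_deriv: "\<And>p. p \<in> {a..b} \<times> UNIV \<Longrightarrow>
                    (L has_derivative blinfun_apply (L' p)) (at p within {a..b} \<times> UNIV)"
    and L'_cont: "continuous_on ({a..b} \<times> UNIV) L'"
    \<comment> \<open>z = z[x;t] solves the ODE\<close>
    and z_init: "z a = za"
    and z_ode: "\<And>t. t \<in> {a..b} \<Longrightarrow>
                 (z has_real_derivative L (t, x t, caputo_vec \<alpha> a b x t, z t)) (at t within {a..b})"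
    \<comment> \<open>the fractional RL derivatives of lambda * dL/d(D x_j) exist and are continuous\<close>
    and RL_ex: "\<And>j t. t \<in> {a..b} \<Longrightarrow> RL_right_exists (\<alpha> j) a b
                 (\<lambda>t. exp (- integral {a..t} (\<lambda>\<tau>. L' (\<tau>, x \<tau>, caputo_vec \<alpha> a b x \<tau>, z \<tau>) (0, 0, 0, 1)))
                      * L' (t, x t, caputo_vec \<alpha> a b x t, z t) (0, 0, axis j 1, 0)) t"
    and RL_cont: "\<And>j. continuous_on {a..b} (RL_right (\<alpha> j) a b
                 (\<lambda>t. exp (- integral {a..t} (\<lambda>\<tau>. L' (\<tau>, x \<tau>, caputo_vec \<alpha> a b x \<tau>, z \<tau>) (0, 0, 0, 1)))
                      * L' (t, x t, caputo_vec \<alpha> a b x t, z t) (0, 0, axis j 1, 0)))"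
    \<comment> \<open>the one-parameter family of transformations\<close>
    and eps: "\<epsilon> > 0"
    and h_C2: "\<And>j. C2_on ({a..b} \<times> UNIV \<times> {-\<epsilon><..<\<epsilon>}) (h j)"
    and h_0: "\<And>j t y. t \<in> {a..b} \<Longrightarrow> h j (t, y, 0) = y $ j"
    and xi_def: "\<And>j t y. t \<in> {a..b} \<Longrightarrow>
                   ((\<lambda>s. h j (t, y, s)) has_real_derivative \<xi> j t y) (at 0)"
    \<comment> \<open>Z s = z-bar[x + s xi; .] solves the same ODE with x replaced by x + s xi\<close>
    and Z_0: "\<And>t. t \<in> {a..b} \<Longrightarrow> Z 0 t = z t"
    and Z_init: "\<And>s. s \<in> {-\<epsilon><..<\<epsilon>} \<Longrightarrow> Z s a = za"
    and Z_ode: "\<And>s t. s \<in> {-\<epsilon><..<\<epsilon>} \<Longrightarrow> t \<in> {a..b} \<Longrightarrow>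
                 (Z s has_real_derivative
                    L (t, x t + s *\<^sub>R (\<chi> j. \<xi> j t (x t)),
                       caputo_vec \<alpha> a b (\<lambda>\<tau>. x \<tau> + s *\<^sub>R (\<chi> j. \<xi> j \<tau> (x \<tau>))) t,
                       Z s t)) (at t within {a..b})"
    \<comment> \<open>invariance: theta(t) = d/ds Z s t at s = 0 vanishes identically\<close>
    and invariant: "\<And>t. t \<in> {a..b} \<Longrightarrow> ((\<lambda>s. Z s t) has_real_derivative 0) (at 0)"
    \<comment> \<open>generalized fractional Euler--Lagrange equations\<close>
    and EL: "\<And>j t. t \<in> {a..b} \<Longrightarrow>
               exp (- integral {a..t} (\<lambda>\<tau>. L' (\<tau>, x \<tau>, caputo_vec \<alpha> a b x \<tau>, z \<tau>) (0, 0, 0, 1)))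
                 * L' (t, x t, caputo_vec \<alpha> a b x t, z t) (0, axis j 1, 0, 0)
               + RL_right (\<alpha> j) a b
                 (\<lambda>t. exp (- integral {a..t} (\<lambda>\<tau>. L' (\<tau>, x \<tau>, caputo_vec \<alpha> a b x \<tau>, z \<tau>) (0, 0, 0, 1)))
                      * L' (t, x t, caputo_vec \<alpha> a b x t, z t) (0, 0, axis j 1, 0)) t = 0"
  shows "\<forall>t\<in>{a..b}. (\<Sum>j\<in>UNIV. frac_D (\<alpha> j) a b
            (\<lambda>t. exp (- integral {a..t} (\<lambda>\<tau>. L' (\<tau>, x \<tau>, caputo_vec \<alpha> a b x \<tau>, z \<tau>) (0, 0, 0, 1)))
                 * L' (t, x t, caputo_vec \<alpha> a b x t, z t) (0, 0, axis j 1, 0))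
            (\<lambda>t. \<xi> j t (x t)) t) = 0"
proof -
  obtain X' where X'1: "\<forall>t\<in>{a..b}. (x has_vector_derivative X' t) (at t within {a..b})"
      and X'2: "continuous_on {a..b} X'" using C1_vd[OF x_C1] by blast
  have xj_d: "\<forall>t\<in>{a..b}. ((\<lambda>\<tau>. x \<tau> $ j) has_vector_derivative X' t $ j) (at t within {a..b})" for j
    using X'1 bounded_linear.has_vector_derivative[OF bounded_linear_vec_nth] by blast
  have xj_c: "continuous_on {a..b} (\<lambda>t. X' t $ j)" for j using X'2 by (intro continuous_intros)
  define g where "g j t = \<xi> j t (x t)" for j t
  have "\<forall>j. \<exists>g'. (\<forall>t\<in>{a..b}. (g j has_vector_derivative g' t) (at t within {a..b})) \<and> continuous_on {a..b} g'"
  proof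
    fix j
    show "\<exists>g'. (\<forall>t\<in>{a..b}. (g j has_vector_derivative g' t) (at t within {a..b})) \<and> continuous_on {a..b} g'"
      unfolding g_def by (rule xi_C1[OF eps x_C1 h_C2 xi_def])
  qed
  then obtain G' where G': "\<And>j. (\<forall>t\<in>{a..b}. (g j has_vector_derivative G' j t) (at t within {a..b})) \<and> continuous_on {a..b} (G' j)"
    by metis
  have al1: "\<alpha> j < 1" for j using alpha[of j] by auto
  define \<xi>v where "\<xi>v t = (\<chi> j. g j t)" for t
  define D\<xi>v where "D\<xi>v t = (\<chi> j. caputo_left (\<alpha> j) a b (g j) t)" for t
  have lin: "caputo_vec \<alpha> a b (\<lambda>\<tau>. x \<tau> + s *\<^sub>R (\<chi> j. \<xi> j \<tau> (x \<tau>))) t = caputo_vec \<alpha> a b x t + s *\<^sub>R D\<xi>v t"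
    if t: "t \<in> {a..b}" for s t
  proof -
    have "caputo_left (\<alpha> j) a b (\<lambda>\<tau>. x \<tau> $ j + s * g j \<tau>) t
        = caputo_left (\<alpha> j) a b (\<lambda>\<tau>. x \<tau> $ j) t + s * caputo_left (\<alpha> j) a b (g j) t" for j
      by (rule caputo_lin[OF ab al1 t xj_d xj_c]) (use G' in auto)
    then show ?thesis unfolding caputo_vec_def D\<xi>v_def g_def by (simp add: vec_eq_iff)
  qed
  have x_c: "continuous_on {a..b} x" by (rule C1_cont[OF x_C1])
  have Dx_c: "continuous_on {a..b} (caputo_vec \<alpha> a b x)" by (rule C1_cont[OF Dx_C1])
  have z_c: "continuous_on {a..b} z" unfolding continuous_on_eq_continuous_within
    using z_ode DERIV_continuous by blast
  have g_c: "continuous_on {a..b} (g j)" for j unfolding continuous_on_eq_continuous_within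
    using G' has_vector_derivative_continuous by blast
  have \<xi>v_c: "continuous_on {a..b} \<xi>v" unfolding \<xi>v_def by (intro continuous_intros g_c)
  have D\<xi>v_c: "continuous_on {a..b} D\<xi>v" unfolding D\<xi>v_def
    by (intro continuous_intros caputo_cont[OF ab al1]) (use G' in auto)
  define p where "p t = (t, x t, caputo_vec \<alpha> a b x t, z t)" for t
  have p_c: "continuous_on {a..b} p" unfolding p_def using x_c Dx_c z_c by (intro continuous_intros)
  define F where "F t = blinfun_apply (L' (p t)) (0, \<xi>v t, D\<xi>v t, 0)" for t
  have Fz: "F t0 = 0" if t0: "t0 \<in> {a..b}" for t0
  proof (rule ccontr)
    assume Fne: "F t0 \<noteq> 0"
    define \<Lambda> where "\<Lambda> = L' (p t0)"
    define F0 where "F0 t = blinfun_apply \<Lambda> (0, \<xi>v t, D\<xi>v t, 0)" for t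
    define \<sigma> :: real where "\<sigma> = sgn (F t0)"
    define c where "c = \<bar>F t0\<bar> / 2"
    have c_pos: "c > 0" using Fne unfolding c_def by auto
    have F0t0: "F0 t0 = F t0" unfolding F0_def F_def \<Lambda>_def ..
    have \<sigma>F: "\<sigma> * F0 t0 = 2 * c" unfolding F0t0 \<sigma>_def c_def using Fne
      by (cases "F t0 > 0") auto
    have \<sigma>1: "\<bar>\<sigma>\<bar> = 1" unfolding \<sigma>_def using Fne by (cases "F t0 > 0") auto
    define M where "M = norm (\<xi>v t0) + norm (D\<xi>v t0) + 1"
    have M1: "M \<ge> 1" unfolding M_def by auto
    define \<eta> where "\<eta> = c / (8 * (2 * M + 1))"
    have \<eta>_pos: "\<eta> > 0" unfolding \<eta>_def using c_pos M1 by auto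
    have \<eta>M: "\<eta> * (2 * M + 1) = c / 8"
    proof -
      have gen: "c / (8 * X) * X = c / 8" if "X > 0" for X :: real using that by (simp add: field_simps)
      show ?thesis unfolding \<eta>_def by (rule gen) (use M1 in auto)
    qed
    define D where "D = {a..b} \<times> (UNIV :: ((real^'n) \<times> (real^'n) \<times> real) set)"
    have pD: "p t \<in> D" if "t \<in> {a..b}" for t unfolding p_def D_def using that by auto
    obtain r where r_pos: "r > 0" and r: "\<And>q. q \<in> D \<Longrightarrow> dist q (p t0) < r \<Longrightarrow> dist (L' q) \<Lambda> < \<eta>"
    proof -
      have C: "\<forall>e>0. \<exists>d>0. \<forall>x'\<in>{a..b} \<times> UNIV. dist x' (p t0) < d \<longrightarrow> dist (L' x') (L' (p t0)) < e"
        using L'_cont[unfolded continuous_on_iff] pD[OF t0, unfolded D_def] by (rule bspec)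
      from C[rule_format, OF \<eta>_pos] obtain r where "r > 0"
        and "\<forall>x'\<in>{a..b} \<times> UNIV. dist x' (p t0) < r \<longrightarrow> dist (L' x') (L' (p t0)) < \<eta>" by blast
      then show ?thesis using that unfolding \<Lambda>_def D_def by blast
    qed
    have MVT: "\<bar>L q2 - L q1 - blinfun_apply \<Lambda> (q2 - q1)\<bar> \<le> \<eta> * norm (q2 - q1)"
      if q1: "q1 \<in> D" "dist q1 (p t0) < r" and q2: "q2 \<in> D" "dist q2 (p t0) < r" for q1 q2
    proof -
      define S where "S = D \<inter> ball (p t0) r"
      have cS: "convex S" unfolding S_def D_def
        by (intro convex_Int convex_Times convex_ball convex_UNIV) auto
      have dS: "((\<lambda>q. L q - blinfun_apply \<Lambda> q) has_derivative blinfun_apply (L' q - \<Lambda>)) (at q within S)"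
        if "q \<in> S" for q
      proof -
        have qD: "q \<in> {a..b} \<times> UNIV" using that unfolding S_def D_def by auto
        have "(L has_derivative blinfun_apply (L' q)) (at q within S)"
          using has_derivative_subset[OF L_deriv[OF qD]] unfolding S_def D_def by auto
        then have "((\<lambda>q. L q - blinfun_apply \<Lambda> q) has_derivative (\<lambda>h. blinfun_apply (L' q) h - blinfun_apply \<Lambda> h)) (at q within S)"
          by (intro has_derivative_diff bounded_linear_imp_has_derivative blinfun.bounded_linear_right)
        moreover have "(\<lambda>h. blinfun_apply (L' q) h - blinfun_apply \<Lambda> h) = blinfun_apply (L' q - \<Lambda>)"
          by (auto simp: blinfun.diff_left)
        ultimately show ?thesis by simp
      qed
      have bS: "onorm (blinfun_apply (L' q - \<Lambda>)) \<le> \<eta>" if "q \<in> S" for q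
      proof -
        have "dist (L' q) \<Lambda> < \<eta>" using r that unfolding S_def by (auto simp: dist_commute)
        then show ?thesis by (simp add: norm_blinfun.rep_eq[symmetric] dist_norm)
      qed
      have "q1 \<in> S" "q2 \<in> S" using q1 q2 unfolding S_def by (auto simp: dist_commute)
      from differentiable_bound[OF cS dS bS this(2,1)]
      have "norm ((L q2 - blinfun_apply \<Lambda> q2) - (L q1 - blinfun_apply \<Lambda> q1)) \<le> \<eta> * norm (q2 - q1)" .
      moreover have "blinfun_apply \<Lambda> (q2 - q1) = blinfun_apply \<Lambda> q2 - blinfun_apply \<Lambda> q1"
        by (rule blinfun.diff_right)
      ultimately show ?thesis by (simp add: algebra_simps)
    qed
    have F0_t: "(F0 \<longlongrightarrow> F0 t0) (at t0 within {a..b})"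
    proof -
      have "(\<xi>v \<longlongrightarrow> \<xi>v t0) (at t0 within {a..b})" "(D\<xi>v \<longlongrightarrow> D\<xi>v t0) (at t0 within {a..b})"
        using \<xi>v_c D\<xi>v_c t0 unfolding continuous_on_def by auto
      then show ?thesis unfolding F0_def by (intro tendsto_intros)
    qed
    have \<xi>v_t: "(\<xi>v \<longlongrightarrow> \<xi>v t0) (at t0 within {a..b})" using \<xi>v_c t0 unfolding continuous_on_def by auto
    have D\<xi>v_t: "(D\<xi>v \<longlongrightarrow> D\<xi>v t0) (at t0 within {a..b})" using D\<xi>v_c t0 unfolding continuous_on_def by auto
    have p_t: "(p \<longlongrightarrow> p t0) (at t0 within {a..b})" using p_c t0 unfolding continuous_on_def by auto
    define P where "P t \<longleftrightarrow> dist (F0 t) (F0 t0) < c \<and> dist (\<xi>v t) (\<xi>v t0) < 1 \<and> dist (D\<xi>v t) (D\<xi>v t0) < 1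
        \<and> dist (p t) (p t0) < r / 2" for t
    have "eventually P (at t0 within {a..b})"
    proof -
      have "r / 2 > 0" using r_pos by auto
      from tendstoD[OF p_t this]
      have E4: "eventually (\<lambda>t. dist (p t) (p t0) < r / 2) (at t0 within {a..b})" .
      show ?thesis unfolding P_def
        by (intro eventually_conj tendstoD[OF F0_t c_pos] tendstoD[OF \<xi>v_t zero_less_one]
           tendstoD[OF D\<xi>v_t zero_less_one] E4)
    qed
    then obtain d where d_pos: "d > 0" and d0: "\<forall>t\<in>{a..b}. t \<noteq> t0 \<and> dist t t0 < d \<longrightarrow> P t"
      unfolding eventually_at by blast
    have Pt0: "P t0" unfolding P_def using c_pos r_pos by auto
    have dP: "P t" if "t \<in> {a..b}" "dist t t0 < d" for t using d0 Pt0 that by (cases "t = t0") auto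
    define t1 where "t1 = max a (t0 - d/2)"
    define t2 where "t2 = min b (t0 + d/2)"
    have t12: "t1 < t2" unfolding t1_def t2_def using ab d_pos t0 by auto
    have t12ab: "a \<le> t1" "t2 \<le> b" unfolding t1_def t2_def by auto
    have t12P: "P t" if "t \<in> {t1..t2}" for t
    proof (rule dP)
      show "t \<in> {a..b}" using that t12ab by auto
      show "dist t t0 < d" using that d_pos unfolding t1_def t2_def dist_real_def by auto
    qed
    define Lz where "Lz = blinfun_apply \<Lambda> (0, 0, 0, 1)"
    define \<delta> where "\<delta> = min 1 (min (c / (4 * (\<bar>Lz\<bar> + 1))) (c * (t2 - t1) / 4))"
    have \<delta>_pos: "\<delta> > 0" unfolding \<delta>_def using c_pos t12 by auto
    have \<delta>1: "\<delta> \<le> 1" unfolding \<delta>_def by auto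
    have \<delta>2: "\<delta> * \<bar>Lz\<bar> \<le> c / 4"
    proof -
      have "\<delta> \<le> c / (4 * (\<bar>Lz\<bar> + 1))" unfolding \<delta>_def by auto
      then have "\<delta> * (4 * (\<bar>Lz\<bar> + 1)) \<le> c" by (simp add: pos_le_divide_eq)
      then show ?thesis using \<delta>_pos by (simp add: algebra_simps)
    qed
    have \<delta>3: "\<delta> \<le> c * (t2 - t1) / 4" unfolding \<delta>_def by (rule order.trans[OF min.cobounded2 min.cobounded2])
    have inv_lim: "((\<lambda>y. (Z y t - z t) / y) \<longlongrightarrow> 0) (at 0)" if "t \<in> {a..b}" for t
      using invariant[OF that] Z_0[OF that] unfolding has_field_derivative_iff by simp
    define Q where "Q y \<longleftrightarrow> dist ((Z y t1 - z t1) / y) 0 < \<delta>/2 \<and> dist ((Z y t2 - z t2) / y) 0 < \<delta>/2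
          \<and> dist y 0 < min \<epsilon> (r / (2 * (2 * M + 1)))" for y
    have "eventually Q (at (0::real))"
    proof -
      have I: "((\<lambda>y::real. y) \<longlongrightarrow> 0) (at 0)" by (rule tendsto_ident_at)
      have m: "min \<epsilon> (r / (2 * (2 * M + 1))) > 0" using eps r_pos M1 by auto
      have h2: "\<delta>/2 > 0" using \<delta>_pos by auto
      have t1ab: "t1 \<in> {a..b}" and t2ab: "t2 \<in> {a..b}" using t12ab t12 by auto
      show ?thesis unfolding Q_def
        by (intro eventually_conj tendstoD[OF inv_lim[OF t1ab] h2] tendstoD[OF inv_lim[OF t2ab] h2]
            tendstoD[OF I m])
    qed
    then obtain d' where d'_pos: "d' > 0" and d'Q: "\<forall>y. y \<noteq> 0 \<and> dist y 0 < d' \<longrightarrow> Q y"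
      unfolding eventually_at by auto
    define s where "s = \<sigma> * (d' / 2)"
    have abs_s: "\<bar>s\<bar> = d' / 2" unfolding s_def using \<sigma>1 d'_pos by (simp add: abs_mult)
    have Qs: "Q s" using d'Q abs_s d'_pos by auto
    have s_ne: "s \<noteq> 0" using abs_s d'_pos by auto
    have s_eps: "s \<in> {-\<epsilon><..<\<epsilon>}" using Qs unfolding Q_def by auto
    have s_r: "\<bar>s\<bar> * (2 * M + 1) < r / 2"
    proof -
      have "\<bar>s\<bar> < r / (2 * (2 * M + 1))" using Qs unfolding Q_def by auto
      then show ?thesis using M1 by (simp add: pos_less_divide_eq algebra_simps)
    qed
    have s\<sigma>: "s = \<sigma> * \<bar>s\<bar>" by (subst abs_s) (simp add: s_def)
    define f where "f t = Z s t - z t" for t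
    have f_end: "\<bar>f t\<bar> \<le> \<delta> * \<bar>s\<bar> / 2" if "t = t1 \<or> t = t2" for t
    proof -
      have "\<bar>f t / s\<bar> < \<delta> / 2" using Qs that unfolding Q_def f_def by auto
      then have "\<bar>f t\<bar> < \<delta> / 2 * \<bar>s\<bar>" using s_ne by (simp add: abs_div pos_divide_less_eq)
      then show ?thesis by simp
    qed
    define w where "w t = ((0::real), s *\<^sub>R \<xi>v t, s *\<^sub>R D\<xi>v t, f t)" for t
    have Zs_d: "(Z s has_real_derivative L (p t + w t)) (at t within {a..b})" if "t \<in> {a..b}" for t
    proof -
      have "(\<chi> j. \<xi> j t (x t)) = \<xi>v t" unfolding \<xi>v_def g_def ..
      moreover have "(\<lambda>\<tau>. x \<tau> + s *\<^sub>R (\<chi> j. \<xi> j \<tau> (x \<tau>))) = (\<lambda>\<tau>. x \<tau> + s *\<^sub>R (\<chi> j. \<xi> j \<tau> (x \<tau>)))" ..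
      ultimately have "p t + w t = (t, x t + s *\<^sub>R (\<chi> j. \<xi> j t (x t)),
                       caputo_vec \<alpha> a b (\<lambda>\<tau>. x \<tau> + s *\<^sub>R (\<chi> j. \<xi> j \<tau> (x \<tau>))) t, Z s t)"
        unfolding p_def w_def f_def lin[OF that] by simp
      then show ?thesis using Z_ode[OF s_eps that] by simp
    qed
    have f_d: "(f has_real_derivative (L (p t + w t) - L (p t))) (at t)" if "t \<in> {t1<..<t2}" for t
    proof -
      have tab: "t \<in> {a..b}" and tint: "t \<in> interior {a..b}" using that t12ab by auto
      have "(z has_real_derivative L (p t)) (at t within {a..b})" using z_ode[OF tab] unfolding p_def .
      then have "(f has_real_derivative (L (p t + w t) - L (p t))) (at t within {a..b})"
        unfolding f_def by (intro DERIV_diff Zs_d[OF tab])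
      then show ?thesis using at_within_interior[OF tint] by simp
    qed
    have f_c: "continuous_on {t1..t2} f"
    proof -
      have "continuous_on {a..b} (Z s)" unfolding continuous_on_eq_continuous_within
        using Zs_d DERIV_continuous by blast
      then have "continuous_on {a..b} f" unfolding f_def using z_c by (intro continuous_intros)
      then show ?thesis by (rule continuous_on_subset) (use t12ab in auto)
    qed
    have f_pos: "L (p t + w t) - L (p t) \<ge> \<bar>s\<bar> * c / 2"
      if t: "t \<in> {t1<..<t2}" and band: "\<bar>f t\<bar> \<le> \<delta> * \<bar>s\<bar>" for t
    proof -
      have tab: "t \<in> {a..b}" using t t12ab by auto
      have Pt: "P t" using t12P t by auto
      have n1: "norm (\<xi>v t) \<le> norm (\<xi>v t0) + 1"
        using Pt norm_triangle_ineq2[of "\<xi>v t" "\<xi>v t0"] unfolding P_def dist_norm by linarith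
      have n2: "norm (D\<xi>v t) \<le> norm (D\<xi>v t0) + 1"
        using Pt norm_triangle_ineq2[of "D\<xi>v t" "D\<xi>v t0"] unfolding P_def dist_norm by linarith
      have nw: "norm (w t) \<le> \<bar>s\<bar> * (2 * M + 1)"
      proof -
        have "norm (w t) \<le> norm (0::real) + norm (s *\<^sub>R \<xi>v t, s *\<^sub>R D\<xi>v t, f t)"
          unfolding w_def by (rule norm_Pair_le)
        also have "\<dots> \<le> norm (s *\<^sub>R \<xi>v t) + (norm (s *\<^sub>R D\<xi>v t) + norm (f t))"
          using norm_Pair_le[of "s *\<^sub>R \<xi>v t" "(s *\<^sub>R D\<xi>v t, f t)"] norm_Pair_le[of "s *\<^sub>R D\<xi>v t" "f t"] by simp
        also have "\<dots> = \<bar>s\<bar> * norm (\<xi>v t) + \<bar>s\<bar> * norm (D\<xi>v t) + \<bar>f t\<bar>" by simp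
        also have "\<dots> \<le> \<bar>s\<bar> * (norm (\<xi>v t0) + 1) + \<bar>s\<bar> * (norm (D\<xi>v t0) + 1) + \<delta> * \<bar>s\<bar>"
          using n1 n2 band by (intro add_mono mult_left_mono) auto
        also have "\<dots> \<le> \<bar>s\<bar> * (2 * M + 1)"
        proof -
          have "\<delta> * \<bar>s\<bar> \<le> 1 * \<bar>s\<bar>" using \<delta>1 by (intro mult_right_mono) auto
          moreover have "\<bar>s\<bar> * (2 * M + 1) - (\<bar>s\<bar> * (norm (\<xi>v t0) + 1) + \<bar>s\<bar> * (norm (D\<xi>v t0) + 1) + \<bar>s\<bar>)
              = \<bar>s\<bar> * norm (\<xi>v t0) + \<bar>s\<bar> * norm (D\<xi>v t0)"
            unfolding M_def by (simp add: algebra_simps)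
          moreover have "0 \<le> \<bar>s\<bar> * norm (D\<xi>v t0)" "0 \<le> \<bar>s\<bar> * norm (\<xi>v t0)" by simp_all
          ultimately show ?thesis by linarith
        qed
        finally show ?thesis .
      qed
      have d1: "dist (p t) (p t0) < r / 2" using Pt unfolding P_def by auto
      have d2: "dist (p t + w t) (p t0) < r"
      proof -
        have "dist (p t + w t) (p t0) \<le> dist (p t) (p t0) + norm (w t)"
          unfolding dist_norm using norm_triangle_ineq[of "p t - p t0" "w t"] by (simp add: algebra_simps)
        then show ?thesis using d1 nw s_r by linarith
      qed
      have pwD: "p t + w t \<in> D" unfolding D_def p_def w_def using tab by auto
      have lin_err: "\<bar>L (p t + w t) - L (p t) - blinfun_apply \<Lambda> (w t)\<bar> \<le> \<bar>s\<bar> * c / 8"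
      proof -
        have "\<bar>L (p t + w t) - L (p t) - blinfun_apply \<Lambda> ((p t + w t) - p t)\<bar> \<le> \<eta> * norm ((p t + w t) - p t)"
          by (rule MVT[OF pD[OF tab] _ pwD d2]) (use d1 r_pos in auto)
        also have "\<dots> \<le> \<eta> * (\<bar>s\<bar> * (2 * M + 1))" using nw \<eta>_pos by (intro mult_left_mono) auto
        also have "\<dots> = \<bar>s\<bar> * (\<eta> * (2 * M + 1))" by (simp only: mult.left_commute)
        also have "\<dots> = \<bar>s\<bar> * c / 8" unfolding \<eta>M by simp
        finally show ?thesis by simp
      qed
      have wdec: "w t = s *\<^sub>R (0, \<xi>v t, D\<xi>v t, 0) + f t *\<^sub>R (0, 0, 0, 1)" unfolding w_def by simp
      have Lw: "blinfun_apply \<Lambda> (w t) = s * F0 t + f t * Lz"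
        unfolding wdec blinfun.add_right blinfun.scaleR_right F0_def Lz_def by simp
      have sF: "s * F0 t \<ge> \<bar>s\<bar> * c"
      proof -
        have "\<bar>F0 t - F0 t0\<bar> < c" using Pt unfolding P_def dist_real_def by auto
        then have "\<bar>\<sigma> * (F0 t - F0 t0)\<bar> < c" using \<sigma>1 by (simp add: abs_mult)
        then have "\<sigma> * F0 t \<ge> c" using \<sigma>F by (simp add: algebra_simps abs_less_iff)
        then have "\<bar>s\<bar> * (\<sigma> * F0 t) \<ge> \<bar>s\<bar> * c" by (intro mult_left_mono) auto
        moreover have "s * F0 t = \<bar>s\<bar> * (\<sigma> * F0 t)"
        proof -
          have "s * F0 t = (\<sigma> * \<bar>s\<bar>) * F0 t" using arg_cong[OF s\<sigma>, of "\<lambda>u. u * F0 t"] .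
          then show ?thesis by (simp only: ac_simps)
        qed
        ultimately show ?thesis by linarith
      qed
      have fL: "\<bar>f t * Lz\<bar> \<le> \<bar>s\<bar> * c / 4"
      proof -
        have "\<bar>f t * Lz\<bar> = \<bar>f t\<bar> * \<bar>Lz\<bar>" by (simp add: abs_mult)
        also have "\<dots> \<le> (\<delta> * \<bar>s\<bar>) * \<bar>Lz\<bar>" using band by (intro mult_right_mono) auto
        also have "\<dots> = \<bar>s\<bar> * (\<delta> * \<bar>Lz\<bar>)" by (simp add: algebra_simps)
        also have "\<dots> \<le> \<bar>s\<bar> * (c / 4)" using \<delta>2 by (intro mult_left_mono) auto
        finally show ?thesis by simp
      qed
      have A: "- (L (p t + w t) - L (p t) - blinfun_apply \<Lambda> (w t)) \<le> \<bar>s\<bar> * c / 8"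
        using lin_err by (rule abs_le_D2)
      have B: "- (f t * Lz) \<le> \<bar>s\<bar> * c / 4" using fL by (rule abs_le_D2)
      have "0 \<le> \<bar>s\<bar> * c" using c_pos by simp
      then show ?thesis using A B Lw sF by linarith
    qed
    show False
    proof (rule band_contra[OF t12 f_c f_d])
      show "\<And>t. t \<in> {t1<..<t2} \<Longrightarrow> \<bar>f t\<bar> \<le> \<delta> * \<bar>s\<bar> \<Longrightarrow> \<bar>s\<bar> * c / 2 \<le> L (p t + w t) - L (p t)"
        using f_pos by auto
      show "0 < \<bar>s\<bar> * c / 2" using s_ne c_pos by auto
      show "0 < \<delta> * \<bar>s\<bar>" using s_ne \<delta>_pos by auto
      show "\<bar>f t1\<bar> \<le> \<delta> * \<bar>s\<bar> / 2" "\<bar>f t2\<bar> \<le> \<delta> * \<bar>s\<bar> / 2" using f_end by auto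
      have "\<delta> * \<bar>s\<bar> \<le> (c * (t2 - t1) / 4) * \<bar>s\<bar>" using \<delta>3 by (intro mult_right_mono) auto
      also have "\<dots> < \<bar>s\<bar> * c / 2 * (t2 - t1)"
      proof -
        have X: "\<bar>s\<bar> * c * (t2 - t1) > 0" using s_ne c_pos t12 by (intro mult_pos_pos) auto
        have "(c * (t2 - t1) / 4) * \<bar>s\<bar> = (\<bar>s\<bar> * c * (t2 - t1)) / 4" by (simp add: algebra_simps)
        moreover have "\<bar>s\<bar> * c / 2 * (t2 - t1) = (\<bar>s\<bar> * c * (t2 - t1)) / 2" by (simp add: algebra_simps)
        ultimately show ?thesis using X by linarith
      qed
      finally show "\<bar>s\<bar> * c / 2 * (t2 - t1) > \<delta> * \<bar>s\<bar>" .
    qed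
  qed

  show ?thesis
  proof
    fix t0 assume t0: "t0 \<in> {a..b}"
    define lam where "lam = exp (- integral {a..t0} (\<lambda>\<tau>. L' (\<tau>, x \<tau>, caputo_vec \<alpha> a b x \<tau>, z \<tau>) (0, 0, 0, 1)))"
    have each: "frac_D (\<alpha> j) a b
            (\<lambda>t. exp (- integral {a..t} (\<lambda>\<tau>. L' (\<tau>, x \<tau>, caputo_vec \<alpha> a b x \<tau>, z \<tau>) (0, 0, 0, 1)))
                 * L' (t, x t, caputo_vec \<alpha> a b x t, z t) (0, 0, axis j 1, 0))
            (\<lambda>t. \<xi> j t (x t)) t0
       = lam * (blinfun_apply (L' (p t0)) (0, axis j 1, 0, 0) * \<xi>v t0 $ j
            + blinfun_apply (L' (p t0)) (0, 0, axis j 1, 0) * D\<xi>v t0 $ j)" for j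
    proof -
      have EL': "RL_right (\<alpha> j) a b
                 (\<lambda>t. exp (- integral {a..t} (\<lambda>\<tau>. L' (\<tau>, x \<tau>, caputo_vec \<alpha> a b x \<tau>, z \<tau>) (0, 0, 0, 1)))
                      * L' (t, x t, caputo_vec \<alpha> a b x t, z t) (0, 0, axis j 1, 0)) t0
          = - (lam * blinfun_apply (L' (p t0)) (0, axis j 1, 0, 0))"
        using EL[OF t0, of j] unfolding lam_def p_def by linarith
      have g_eq: "g j = (\<lambda>t. \<xi> j t (x t))" by (rule ext) (simp add: g_def)
      have Dj: "D\<xi>v t0 $ j = caputo_left (\<alpha> j) a b (\<lambda>t. \<xi> j t (x t)) t0"
        unfolding D\<xi>v_def by (simp add: g_eq)
      have xj: "\<xi>v t0 $ j = \<xi> j t0 (x t0)" unfolding \<xi>v_def g_def by simp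
      have ring: "E * B * C - X * (- (E * A)) = E * (A * X + B * C)" for E A B C X :: real
        by (simp add: algebra_simps)
      show ?thesis unfolding frac_D_def EL' unfolding lam_def[symmetric] unfolding p_def[symmetric] Dj xj
        by (rule ring)
    qed
    show "(\<Sum>j\<in>UNIV. frac_D (\<alpha> j) a b
            (\<lambda>t. exp (- integral {a..t} (\<lambda>\<tau>. L' (\<tau>, x \<tau>, caputo_vec \<alpha> a b x \<tau>, z \<tau>) (0, 0, 0, 1)))
                 * L' (t, x t, caputo_vec \<alpha> a b x t, z t) (0, 0, axis j 1, 0))
            (\<lambda>t. \<xi> j t (x t)) t0) = 0"
    proof -
      have FS: "F t0 = (\<Sum>j\<in>UNIV. blinfun_apply (L' (p t0)) (0, axis j 1, 0, 0) * \<xi>v t0 $ j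
            + blinfun_apply (L' (p t0)) (0, 0, axis j 1, 0) * D\<xi>v t0 $ j)"
        unfolding F_def by (rule Lsplit)
      have "(\<Sum>j\<in>UNIV. lam * (blinfun_apply (L' (p t0)) (0, axis j 1, 0, 0) * \<xi>v t0 $ j
            + blinfun_apply (L' (p t0)) (0, 0, axis j 1, 0) * D\<xi>v t0 $ j)) = lam * F t0"
        unfolding FS by (rule sum_distrib_left[symmetric])
      also have "\<dots> = 0" using Fz[OF t0] by simp
      finally show ?thesis unfolding each .
    qed
  qed
qed


end
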